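(* For every $\epsilon>0$ and every real $X>1$, \[\sum_{n\ge1,\ n \text{ square-free}}\ \prod_{p\mid n}\frac{\log X}{p\log p}\ll X^{\epsilon},\] where the product is over the primes dividing $n$ and the implied constant depends only on $\epsilon$. *)

theory Defs
  imports "HOL-Analysis.Analysis" "HOL-Computational_Algebra.Computational_Algebra"
begin

end

theory Submission
  imports Defs
begin

lemma primes_prod_dvd:
  fixes m :: nat
  assumes "finite Q" "\<And>p. p \<in> Q \<Longrightarrow> prime p \<and> p dvd m"
  shows "\<Prod>Q dvd m"
  using assms
proof (induction Q rule: finite_induct)
  case empty then show ?case by simp
next
  case (insert p Q)
  have pp: "prime p" using insert.prems by auto
  have cop: "coprime p (\<Prod>Q)"
  proof (rule prime_imp_coprime[OF pp])
    show "\<not> p dvd \<Prod>Q"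
    proof
      assume "p dvd \<Prod>Q"
      then have "\<exists>q\<in>Q. p dvd id q" using prime_dvd_prod_iff[OF insert.hyps(1) pp, of id] by simp
      then obtain q where q: "q \<in> Q" "p dvd q" by auto
      have "prime q" using q insert.prems by auto
      then have "p = q" using primes_dvd_imp_eq[OF pp _ q(2)] by simp
      then show False using insert.hyps(2) q(1) by simp
    qed
  qed
  have "p * \<Prod>Q dvd m"
    by (rule divides_mult) (use insert.prems insert.IH cop in auto)
  then show ?case using insert.hyps by simp
qed

lemma cheb_block:
  fixes n :: nat
  assumes "n \<ge> 1"
  shows "real (card {p. prime p \<and> n < p \<and> p \<le> 2*n}) * ln (real n) \<le> real (2*n) * ln 2"
proof -
  define Q where "Q = {p. prime p \<and> n < p \<and> p \<le> 2*n}"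
  have fin: "finite Q" unfolding Q_def by (rule finite_subset[of _ "{..2*n}"]) auto
  have dvd: "\<Prod>Q dvd (2*n choose n)"
  proof (rule primes_prod_dvd[OF fin])
    fix p assume "p \<in> Q"
    then have pp: "prime p" "n < p" "p \<le> 2*n" unfolding Q_def by auto
    have e: "fact n * fact n * (2*n choose n) = (fact (2*n) :: nat)"
      using binomial_fact_lemma[of n "2*n"] by simp
    have "p dvd (fact (2*n) :: nat)" using pp prime_dvd_fact_iff by auto
    then have "p dvd fact n * fact n * (2*n choose n)" by (simp only: e)
    moreover have "\<not> p dvd (fact n :: nat)" using pp prime_dvd_fact_iff by auto
    ultimately have "p dvd (2*n choose n)" using pp(1) by (simp add: prime_dvd_mult_iff)
    then show "prime p \<and> p dvd (2*n choose n)" using pp by simp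
  qed
  have "\<Prod>Q \<le> (2*n choose n)"
    by (rule dvd_imp_le[OF dvd]) (simp add: zero_less_binomial)
  also have "\<dots> \<le> 2^(2*n)" by (rule binomial_le_pow2)
  finally have A: "\<Prod>Q \<le> 2^(2*n)" .
  have "n ^ card Q \<le> \<Prod>Q"
  proof -
    have "(\<Prod>p\<in>Q. n) \<le> (\<Prod>p\<in>Q. p)"
      by (rule prod_mono) (auto simp: Q_def)
    then show ?thesis by simp
  qed
  with A have "n ^ card Q \<le> 2 ^ (2*n)" by linarith
  then have "real (n ^ card Q) \<le> real (2 ^ (2*n))" by (simp only: of_nat_le_iff)
  then have "real n ^ card Q \<le> 2 ^ (2*n)" by simp
  then have "ln (real n ^ card Q) \<le> ln (2 ^ (2*n))"
    using assms by (subst ln_le_cancel_iff) auto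
  then show ?thesis using assms unfolding Q_def[symmetric]
    by (simp add: ln_realpow)
qed


definition bb :: "nat \<Rightarrow> real" where
  "bb p = (if prime p then 1 / (real p * ln (real p)) else 0)"

lemma bb_nonneg: "bb p \<ge> 0"
proof (cases "prime p")
  case True
  then have "p \<ge> 2" by (simp add: prime_ge_2_nat)
  then have "ln (real p) > 0" by simp
  then show ?thesis using True by (simp add: bb_def)
qed (simp add: bb_def)

lemma block_bound:
  fixes k :: nat
  assumes "k \<ge> 1"
  shows "sum bb {2^k<..2^(k+1)} \<le> 2 / ln 2 * inverse (real k ^ 2)"
proof -
  define n :: nat where "n = 2^k"
  have n1: "n \<ge> 1" unfolding n_def by simp
  define Q where "Q = {p. prime p \<and> n < p \<and> p \<le> 2*n}"
  have QS: "Q \<subseteq> {n<..2*n}" unfolding Q_def by auto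
  have e2: "(2::nat)^(k+1) = 2*n" unfolding n_def by simp
  have lnn: "ln (real n) = real k * ln 2" unfolding n_def by (simp add: ln_realpow)
  have l2: "ln (2::real) > 0" by simp
  have kpos: "real k > 0" using assms by simp
  have "sum bb {2^k<..2^(k+1)} = sum bb Q"
    unfolding e2 n_def[symmetric]
    by (rule sum.mono_neutral_right) (auto simp: Q_def bb_def)
  also have "\<dots> \<le> (\<Sum>p\<in>Q. 1 / (real n * (real k * ln 2)))"
  proof (rule sum_mono)
    fix p assume "p \<in> Q"
    then have pp: "prime p" "n < p" by (auto simp: Q_def)
    have "real n * (real k * ln 2) \<le> real p * ln (real p)"
    proof (rule mult_mono)
      show "real n \<le> real p" using pp by simp
      have "ln (real n) \<le> ln (real p)" using pp n1 by simp
      then show "real k * ln 2 \<le> ln (real p)" using lnn by simp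
      show "0 \<le> real p" by simp
      show "0 \<le> real k * ln 2" using l2 kpos by simp
    qed
    moreover have "real n * (real k * ln 2) > 0" using n1 kpos l2 by simp
    ultimately show "bb p \<le> 1 / (real n * (real k * ln 2))"
      using pp by (simp add: bb_def frac_le)
  qed
  also have "\<dots> = real (card Q) / (real n * (real k * ln 2))" by simp
  also have "\<dots> \<le> (real (2*n) * ln 2 / (real k * ln 2)) / (real n * (real k * ln 2))"
  proof (rule divide_right_mono)
    have "real (card Q) * (real k * ln 2) \<le> real (2*n) * ln 2"
      using cheb_block[OF n1] lnn unfolding Q_def by simp
    then show "real (card Q) \<le> real (2*n) * ln 2 / (real k * ln 2)"
      using kpos l2 by (simp add: pos_le_divide_eq)
    show "0 \<le> real n * (real k * ln 2)" using l2 by simp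
  qed
  also have "\<dots> = 2 / ln 2 * inverse (real k ^ 2)"
    using n1 kpos l2 by (simp add: field_simps power2_eq_square)
  finally show ?thesis .
qed

definition gg :: "nat \<Rightarrow> real" where
  "gg k = (if k = 0 then 1 else 2 / ln 2 * inverse (real k ^ 2))"

lemma block_gg: "sum bb {2^k<..2^(k+1)} \<le> gg k"
proof (cases "k = 0")
  case True
  have "{2^k<..2^(k+1)} = {2::nat}" using True by auto
  moreover have "bb 2 \<le> 1"
  proof -
    have "ln (2::real) \<ge> 1/2" using ln2_ge_two_thirds by linarith
    then show ?thesis by (simp add: bb_def)
  qed
  ultimately show ?thesis using True by (simp add: gg_def)
next
  case False
  then show ?thesis using block_bound[of k] by (simp add: gg_def)
qed

lemma summable_gg: "summable gg"
proof -
  have "summable (\<lambda>k. 2 / ln 2 * inverse (real k ^ 2))"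
    by (intro summable_mult inverse_power_summable) simp
  then show ?thesis
    by (rule summable_cong[THEN iffD1, rotated]) (auto simp: gg_def eventually_at_top_linorder intro!: exI[of _ 1])
qed

lemma partial_pow2: "sum bb {..2^K} = (\<Sum>k<K. sum bb {2^k<..2^(k+1)})"
proof (induction K)
  case 0
  have "{..2^0} = {0::nat, 1}" by auto
  then show ?case by (simp add: bb_def)
next
  case (Suc K)
  have "{..2^Suc K} = {..2^K} \<union> {2^K<..(2::nat)^(K+1)}" by auto
  then have "sum bb {..2^Suc K} = sum bb {..2^K} + sum bb {2^K<..2^(K+1)}"
    by (simp add: sum.union_disjoint ivl_disj_int)
  then show ?case using Suc by simp
qed

lemma summable_bb: "summable bb"
proof (rule bounded_imp_summable)
  show "\<And>n. bb n \<ge> 0" by (rule bb_nonneg)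
  fix n
  have "n \<le> 2^n" using less_exp[of n] by simp
  then have "sum bb {..n} \<le> sum bb {..2^n}"
    by (intro sum_mono2) (auto simp: bb_nonneg)
  also have "\<dots> = (\<Sum>k<n. sum bb {2^k<..2^(k+1)})" by (rule partial_pow2)
  also have "\<dots> \<le> (\<Sum>k<n. gg k)" by (intro sum_mono block_gg)
  also have "\<dots> \<le> suminf gg"
    using summable_gg by (rule sum_le_suminf) (auto simp: gg_def)
  finally show "sum bb {..n} \<le> suminf gg" .
qed

lemma tail_small:
  assumes "r > 0"
  shows "\<exists>N. \<forall>I. finite I \<longrightarrow> (\<forall>i\<in>I. N < i) \<longrightarrow> sum bb I \<le> r"
proof -
  obtain N where N: "\<forall>n\<ge>N. norm (\<Sum>i. bb (i + n)) < r"
    using suminf_exist_split[OF assms summable_bb] by blast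
  show ?thesis
  proof (intro exI allI impI)
    fix I :: "nat set" assume I: "finite I" "\<forall>i\<in>I. N < i"
    define m where "m = Suc (Max (insert 0 I))"
    have "I \<subseteq> {0 + N..<m + N}"
    proof
      fix i assume "i \<in> I"
      then have "i \<le> Max (insert 0 I)" using I by simp
      then have "i < m + N" unfolding m_def by linarith
      moreover have "N < i" using I \<open>i \<in> I\<close> by auto
      ultimately show "i \<in> {0 + N..<m + N}" by simp
    qed
    then have "sum bb I \<le> sum bb {0 + N..<m + N}"
      by (intro sum_mono2) (auto simp: bb_nonneg)
    also have "\<dots> = (\<Sum>i\<in>{0..<m}. bb (i + N))" by (rule sum.shift_bounds_nat_ivl)
    also have "\<dots> \<le> (\<Sum>i. bb (i + N))"
      by (rule sum_le_suminf) (auto simp: bb_nonneg summable_bb)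
    also have "\<dots> \<le> r" using N by auto
    finally show "sum bb I \<le> r" .
  qed
qed


lemma bb_le1: "bb p \<le> 1"
proof (cases "prime p")
  case True
  then have p2: "real p \<ge> 2" using prime_ge_2_nat by simp
  then have "ln (real p) \<ge> ln 2" by simp
  moreover have "ln (2::real) \<ge> 2/3" by (rule ln2_ge_two_thirds)
  ultimately have l: "ln (real p) \<ge> 2/3" by linarith
  have "real p * ln (real p) \<ge> 2 * (2/3)"
    using p2 l by (intro mult_mono) auto
  then show ?thesis using True by (simp add: bb_def)
qed (simp add: bb_def)

lemma sqf_prod:
  fixes n :: nat
  assumes "squarefree n" "n \<noteq> 0"
  shows "\<Prod>(prime_factors n) = n"
proof -
  have m: "\<forall>p\<in>prime_factors n. multiplicity p n = 1"
    using squarefree_factorial_semiring'[OF assms(2)] assms(1) by blast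
  have "\<Prod>(prime_factors n) = (\<Prod>p\<in>prime_factors n. p ^ multiplicity p n)"
    using m by (intro prod.cong) auto
  also have "\<dots> = n" using prod_prime_factors[OF assms(2)] by simp
  finally show ?thesis .
qed

lemma prod_le_exp_sum:
  fixes g :: "nat \<Rightarrow> real"
  assumes "\<And>x. x \<in> S \<Longrightarrow> 0 \<le> g x"
  shows "(\<Prod>x\<in>S. g x + 1) \<le> exp (sum g S)"
proof -
  have "(\<Prod>x\<in>S. g x + 1) \<le> (\<Prod>x\<in>S. exp (g x))"
    using assms by (intro prod_mono) (auto simp: add.commute)
  also have "\<dots> = exp (sum g S)" 
  proof (cases "finite S")
    case True then show ?thesis by (simp add: exp_sum)
  qed simp
  finally show ?thesis .
qed

theorem lemmaB1:
  fixes \<epsilon> :: real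
  assumes "\<epsilon> > 0"
  shows "\<exists>C::real. \<forall>X::real. X > 1 \<longrightarrow>
           (\<exists>s. ((\<lambda>n::nat. \<Prod>p\<in>prime_factors n. ln X / (real p * ln (real p)))
                    has_sum s) {n. n \<ge> 1 \<and> squarefree n}
                \<and> s \<le> C * X powr \<epsilon>)"
proof -
  obtain N where N: "\<And>I. finite I \<Longrightarrow> (\<forall>i\<in>I. N < i) \<Longrightarrow> sum bb I \<le> \<epsilon>/2"
    using tail_small[of "\<epsilon>/2"] assms by auto
  define \<delta> where "\<delta> = \<epsilon> / (2 * (real N + 1))"
  have \<delta>pos: "\<delta> > 0" unfolding \<delta>_def using assms by simp
  define D where "D = max 1 (1/\<delta>)"
  have D1: "D \<ge> 1" unfolding D_def by simp
  have D\<delta>: "D * \<delta> \<ge> 1"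
  proof -
    have "D \<ge> 1/\<delta>" unfolding D_def by simp
    then have "D * \<delta> \<ge> (1/\<delta>) * \<delta>" using \<delta>pos by (intro mult_right_mono) auto
    then show ?thesis using \<delta>pos by simp
  qed
  show ?thesis
  proof (rule exI, intro allI impI)
    fix X :: real assume X: "X > 1"
    define L where "L = ln X"
    have Lpos: "L > 0" unfolding L_def using X by simp
    define a where "a p = L * bb p" for p
    have a_nn: "a p \<ge> 0" for p unfolding a_def using Lpos bb_nonneg[of p] by simp
    define A where "A = {n::nat. n \<ge> 1 \<and> squarefree n}"
    define f where "f = (\<lambda>n::nat. \<Prod>p\<in>prime_factors n. ln X / (real p * ln (real p)))"
    have f_eq: "f n = (\<Prod>p\<in>prime_factors n. a p)" for n
      unfolding f_def a_def L_def
      by (intro prod.cong) (auto simp: bb_def)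
    have f_nn: "f n \<ge> 0" for n unfolding f_eq using a_nn by (simp add: prod_nonneg)
    have key: "sum f F \<le> D^(N+1) * X powr \<epsilon>" if F: "finite F" "F \<subseteq> A" for F
    proof -
      define P where "P = \<Union>(prime_factors ` F)"
      have finP: "finite P" unfolding P_def using F by auto
      have inj: "inj_on prime_factors F"
      proof
        fix m n assume mn: "m \<in> F" "n \<in> F" "prime_factors m = prime_factors n"
        have "m = \<Prod>(prime_factors m)" using mn F sqf_prod[of m] by (auto simp: A_def)
        also have "\<dots> = \<Prod>(prime_factors n)" using mn by simp
        also have "\<dots> = n" using mn F sqf_prod[of n] by (auto simp: A_def)
        finally show "m = n" .
      qed
      have "sum f F = sum (\<lambda>S. prod a S) (prime_factors ` F)"
        using inj by (simp add: sum.reindex f_eq)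
      also have "\<dots> \<le> sum (\<lambda>S. prod a S) (Pow P)"
        using finP by (intro sum_mono2) (auto simp: P_def prod_nonneg a_nn)
      also have "\<dots> = (\<Prod>p\<in>P. a p + 1)"
        using prod_add[OF finP, of a "\<lambda>_. 1"] by simp
      also have "\<dots> = (\<Prod>p\<in>{p\<in>P. p \<le> N}. a p + 1) * (\<Prod>p\<in>{p\<in>P. N < p}. a p + 1)"
      proof -
        have "P = {p\<in>P. p \<le> N} \<union> {p\<in>P. N < p}" by auto
        then show ?thesis using finP
          by (subst prod.union_disjoint[symmetric]) auto
      qed
      also have "\<dots> \<le> (D^(N+1) * exp (\<epsilon>/2 * L)) * exp (\<epsilon>/2 * L)"
      proof (rule mult_mono)
        have "(\<Prod>p\<in>{p\<in>P. p \<le> N}. a p + 1) \<le> (D * exp (\<delta> * L)) ^ (N+1)"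
        proof (rule prod_le_power)
          fix p
          have "a p + 1 \<le> L + 1" unfolding a_def using Lpos bb_le1[of p]
            by (simp add: mult_left_le)
          also have "\<dots> \<le> D * (1 + \<delta> * L)"
          proof -
            have "L \<le> (D * \<delta>) * L" using D\<delta> Lpos by simp
            then show ?thesis using D1 by (simp add: algebra_simps)
          qed
          also have "\<dots> \<le> D * exp (\<delta> * L)"
            using D1 by (intro mult_left_mono) auto
          finally show "0 \<le> a p + 1 \<and> a p + 1 \<le> D * exp (\<delta> * L)"
            using a_nn[of p] by simp
        next
          have "card {p\<in>P. p \<le> N} \<le> card {..N}" by (intro card_mono) auto
          then show "card {p\<in>P. p \<le> N} \<le> N + 1" by simp
        next
          have e1: "exp (\<delta> * L) \<ge> 1" using \<delta>pos Lpos by simp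
          have "1 * 1 \<le> D * exp (\<delta> * L)" by (rule mult_mono'[OF D1 e1]) simp_all
          then show "1 \<le> D * exp (\<delta> * L)" by simp
        qed
        also have "\<dots> = D^(N+1) * exp (\<epsilon>/2 * L)"
        proof -
          have "exp (\<delta> * L) ^ (N+1) = exp (real (N+1) * (\<delta> * L))"
            by (rule exp_of_nat_mult[symmetric])
          also have "real (N+1) * (\<delta> * L) = \<epsilon>/2 * L" unfolding \<delta>_def by (simp add: field_simps)
          finally show ?thesis by (simp add: power_mult_distrib)
        qed
        finally show "(\<Prod>p\<in>{p\<in>P. p \<le> N}. a p + 1) \<le> D^(N+1) * exp (\<epsilon>/2 * L)" .
        have t1: "(\<Prod>p\<in>{p\<in>P. N < p}. a p + 1) \<le> exp (sum a {p\<in>P. N < p})"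
          by (rule prod_le_exp_sum) (rule a_nn)
        have t2: "sum a {p\<in>P. N < p} = L * sum bb {p\<in>P. N < p}"
          unfolding a_def by (simp add: sum_distrib_left)
        have t3: "sum bb {p\<in>P. N < p} \<le> \<epsilon>/2"
          by (rule N) (use finP in auto)
        have t4: "L * sum bb {p\<in>P. N < p} \<le> \<epsilon>/2 * L"
          using mult_left_mono[OF t3, of L] Lpos by (simp add: mult.commute)
        have "exp (sum a {p\<in>P. N < p}) \<le> exp (\<epsilon>/2 * L)"
          using t2 t4 by simp
        with t1 show "(\<Prod>p\<in>{p\<in>P. N < p}. a p + 1) \<le> exp (\<epsilon>/2 * L)"
          by (rule order_trans)
        show "0 \<le> (\<Prod>p\<in>{p\<in>P. N < p}. a p + 1)"
          using a_nn by (intro prod_nonneg) (simp add: add_nonneg_nonneg)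
        show "0 \<le> D^(N+1) * exp (\<epsilon>/2 * L)" using D1 by simp
      qed
      also have "\<dots> = D^(N+1) * exp (\<epsilon> * L)"
        by (simp add: mult.assoc exp_add[symmetric])
      also have "\<dots> = D^(N+1) * X powr \<epsilon>"
        using X unfolding L_def by (simp add: powr_def)
      finally show ?thesis .
    qed
    have summ: "f summable_on A"
    proof (rule nonneg_bdd_above_summable_on)
      show "\<And>x. x \<in> A \<Longrightarrow> 0 \<le> f x" by (rule f_nn)
      show "bdd_above (sum f ` {F. F \<subseteq> A \<and> finite F})"
        using key by (intro bdd_aboveI[of _ "D^(N+1) * X powr \<epsilon>"]) auto
    qed
    have h1: "(f has_sum infsum f A) A" using summ by (rule has_sum_infsum)
    have h2: "infsum f A \<le> D^(N+1) * X powr \<epsilon>"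
      using summ key by (rule infsum_le_finite_sums)
    show "\<exists>s. ((\<lambda>n::nat. \<Prod>p\<in>prime_factors n. ln X / (real p * ln (real p)))
                    has_sum s) {n. n \<ge> 1 \<and> squarefree n}
                \<and> s \<le> D^(N+1) * X powr \<epsilon>"
      using h1 h2 unfolding f_def A_def by blast
  qed
qed

end
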